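(* Let $M$ be an exact $\mathfrak{K}$-module. Then there are isomorphisms $\ker(1-t_2)/\ker\alpha_{02}\cong\ker N(s_1)/\ker\alpha_{01}$, $\operatorname{im}\alpha_{20}/\operatorname{im}(1-t_2)\cong\operatorname{im}\alpha_{10}/\operatorname{im}N(s_1)$, $\ker(1-t_0)/\ker\alpha_{20}\cong\ker(1-s_1)/\ker\alpha_{21}$, $\operatorname{im}\alpha_{02}/\operatorname{im}(1-t_0)\cong\operatorname{im}\alpha_{12}/\operatorname{im}(1-s_1)$, $\ker N(t_0)/\ker\alpha_{10}\cong\ker(1-s_2)/\ker\alpha_{12}$, $\operatorname{im}\alpha_{01}/\operatorname{im}N(t_0)\cong\operatorname{im}\alpha_{21}/\operatorname{im}(1-s_2)$; in particular, for each quotient $X/Y$ above, $Y\subseteq X$.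
   Context: Fix a prime $p$ and let $N(x)=1+x+\dots+x^{p-1}$. A ($\mathbb{Z}/2$-graded) $\mathfrak{K}$-module $M$ amounts to $\mathbb{Z}/2$-graded abelian groups $M_0,M_1,M_2$ with homomorphisms $\alpha_{jk}=\alpha^M_{jk}\colon M_k\to M_j$ for $j\ne k$ in $\{0,1,2\}$ ($\alpha_{12},\alpha_{21}$ grading-reversing, the others grading-preserving) such that $\alpha_{jk}\circ\alpha_{km}=0$ whenever $\{j,k,m\}=\{0,1,2\}$ and, writing $t_0:=1-\alpha_{02}\alpha_{20}$ on $M_0$, $s_1:=1-\alpha_{12}\alpha_{21}$ on $M_1$, $t_2:=1-\alpha_{20}\alpha_{02}$ and $s_2:=1-\alpha_{21}\alpha_{12}$ on $M_2$: $\alpha_{01}\alpha_{10}=N(t_0)$, $\alpha_{10}\alpha_{01}=N(s_1)$, $N(t_2)+N(s_2)=p\cdot\mathrm{id}_{M_2}$. (This is the module-level form of the presentation of Köhler's ring $\mathfrak{K}$.) $M$ is exact if the cyclic sequences $M_0\xrightarrow{\alpha_{10}}M_1\xrightarrow{\alpha_{21}}M_2\xrightarrow{\alpha_{02}}M_0$ and $M_0\xrightarrow{\alpha_{20}}M_2\xrightarrow{\alpha_{12}}M_1\xrightarrow{\alpha_{01}}M_0$ are exact at every place. *)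

theory Defs
  imports "HOL-Algebra.Group" "HOL-Algebra.Coset" "HOL-Computational_Algebra.Primes"
begin

definition additive :: "('a::ab_group_add \<Rightarrow> 'b::ab_group_add) \<Rightarrow> bool" where
  "additive f \<longleftrightarrow> (\<forall>x y. f (x + y) = f x + f y)"

definition add_subgroup :: "'a::ab_group_add set \<Rightarrow> bool" where
  "add_subgroup S \<longleftrightarrow> 0 \<in> S \<and> (\<forall>x\<in>S. \<forall>y\<in>S. x - y \<in> S)"

definition kernel :: "('a \<Rightarrow> 'b::zero) \<Rightarrow> 'a set" where
  "kernel f = {x. f x = 0}"

definition image :: "('a \<Rightarrow> 'b) \<Rightarrow> 'b set" where
  "image f = range f"

definition subgrp :: "'a::ab_group_add set \<Rightarrow> 'a monoid" where
  "subgrp X = \<lparr>carrier = X, monoid.mult = (+), one = 0\<rparr>"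

definition Nop :: "nat \<Rightarrow> ('a::ab_group_add \<Rightarrow> 'a) \<Rightarrow> 'a \<Rightarrow> 'a" where
  "Nop p f x = (\<Sum>i<p. (f ^^ i) x)"

definition z2_grading :: "'a::ab_group_add set \<Rightarrow> 'a set \<Rightarrow> bool" where
  "z2_grading E Od \<longleftrightarrow> add_subgroup E \<and> add_subgroup Od \<and> E \<inter> Od = {0} \<and>
     (\<forall>x. \<exists>e\<in>E. \<exists>u\<in>Od. x = e + u)"

definition comp :: "'a set \<Rightarrow> 'a set \<Rightarrow> bool \<Rightarrow> 'a set" where
  "comp E Od d = (if d then Od else E)"

definition grading_preserving :: "'a set \<Rightarrow> 'a set \<Rightarrow> 'b set \<Rightarrow> 'b set \<Rightarrow> ('a \<Rightarrow> 'b) \<Rightarrow> bool" where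
  "grading_preserving E Od E' Od' f \<longleftrightarrow> f ` E \<subseteq> E' \<and> f ` Od \<subseteq> Od'"

definition grading_reversing :: "'a set \<Rightarrow> 'a set \<Rightarrow> 'b set \<Rightarrow> 'b set \<Rightarrow> ('a \<Rightarrow> 'b) \<Rightarrow> bool" where
  "grading_reversing E Od E' Od' f \<longleftrightarrow> f ` E \<subseteq> Od' \<and> f ` Od \<subseteq> E'"

text \<open>For subgroups Y \<subseteq> X of a graded group (E,Od) and Y' \<subseteq> X' of a graded group (E',Od'):
  X/Y and X'/Y' are isomorphic as Z/2-graded abelian groups (allowing a parity shift e):
  there is a group isomorphism of the quotient groups sending the class of each homogeneous
  element of degree d to the class of a homogeneous element of degree d + e.\<close>
definition graded_quot_iso ::
  "'a::ab_group_add set \<Rightarrow> 'a set \<Rightarrow> 'a set \<Rightarrow> 'a set \<Rightarrow>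
   'b::ab_group_add set \<Rightarrow> 'b set \<Rightarrow> 'b set \<Rightarrow> 'b set \<Rightarrow> bool" where
  "graded_quot_iso E Od X Y E' Od' X' Y' \<longleftrightarrow>
     add_subgroup X \<and> add_subgroup Y \<and> add_subgroup X' \<and> add_subgroup Y' \<and>
     Y \<subseteq> X \<and> Y' \<subseteq> X' \<and>
     (\<exists>\<phi> e. \<phi> \<in> iso (subgrp X Mod Y) (subgrp X' Mod Y') \<and>
        (\<forall>d. \<forall>x\<in>X \<inter> comp E Od d. \<exists>x'\<in>X' \<inter> comp E' Od' (d \<noteq> e).
            \<phi> (r_coset (subgrp X) Y x) = r_coset (subgrp X') Y' x'))"

record ('a, 'b, 'c) kmod =
  ev0 :: "'a set"  od0 :: "'a set"
  ev1 :: "'b set"  od1 :: "'b set"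
  ev2 :: "'c set"  od2 :: "'c set"
  a01 :: "'b \<Rightarrow> 'a"  a10 :: "'a \<Rightarrow> 'b"
  a02 :: "'c \<Rightarrow> 'a"  a20 :: "'a \<Rightarrow> 'c"
  a12 :: "'c \<Rightarrow> 'b"  a21 :: "'b \<Rightarrow> 'c"

definition t0 :: "('a::ab_group_add, 'b, 'c) kmod \<Rightarrow> 'a \<Rightarrow> 'a" where
  "t0 M x = x - a02 M (a20 M x)"
definition s1 :: "('a, 'b::ab_group_add, 'c) kmod \<Rightarrow> 'b \<Rightarrow> 'b" where
  "s1 M x = x - a12 M (a21 M x)"
definition t2 :: "('a, 'b, 'c::ab_group_add) kmod \<Rightarrow> 'c \<Rightarrow> 'c" where
  "t2 M x = x - a20 M (a02 M x)"
definition s2 :: "('a, 'b, 'c::ab_group_add) kmod \<Rightarrow> 'c \<Rightarrow> 'c" where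
  "s2 M x = x - a21 M (a12 M x)"

definition is_kmod :: "nat \<Rightarrow> ('a::ab_group_add, 'b::ab_group_add, 'c::ab_group_add) kmod \<Rightarrow> bool" where
  "is_kmod p M \<longleftrightarrow>
     z2_grading (ev0 M) (od0 M) \<and> z2_grading (ev1 M) (od1 M) \<and> z2_grading (ev2 M) (od2 M) \<and>
     additive (a01 M) \<and> additive (a10 M) \<and> additive (a02 M) \<and>
     additive (a20 M) \<and> additive (a12 M) \<and> additive (a21 M) \<and>
     grading_preserving (ev1 M) (od1 M) (ev0 M) (od0 M) (a01 M) \<and>
     grading_preserving (ev0 M) (od0 M) (ev1 M) (od1 M) (a10 M) \<and>
     grading_preserving (ev2 M) (od2 M) (ev0 M) (od0 M) (a02 M) \<and>
     grading_preserving (ev0 M) (od0 M) (ev2 M) (od2 M) (a20 M) \<and>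
     grading_reversing (ev2 M) (od2 M) (ev1 M) (od1 M) (a12 M) \<and>
     grading_reversing (ev1 M) (od1 M) (ev2 M) (od2 M) (a21 M) \<and>
     (\<forall>x. a01 M (a12 M x) = 0) \<and> (\<forall>x. a02 M (a21 M x) = 0) \<and>
     (\<forall>x. a10 M (a02 M x) = 0) \<and> (\<forall>x. a12 M (a20 M x) = 0) \<and>
     (\<forall>x. a20 M (a01 M x) = 0) \<and> (\<forall>x. a21 M (a10 M x) = 0) \<and>
     (\<forall>x. a01 M (a10 M x) = Nop p (t0 M) x) \<and>
     (\<forall>x. a10 M (a01 M x) = Nop p (s1 M) x) \<and>
     (\<forall>x. Nop p (t2 M) x + Nop p (s2 M) x = (\<Sum>i<p. x))"

definition exact_kmod :: "('a::ab_group_add, 'b::ab_group_add, 'c::ab_group_add) kmod \<Rightarrow> bool" where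
  "exact_kmod M \<longleftrightarrow>
     kernel (a21 M) = image (a10 M) \<and> kernel (a02 M) = image (a21 M) \<and>
     kernel (a10 M) = image (a02 M) \<and>
     kernel (a12 M) = image (a20 M) \<and> kernel (a01 M) = image (a12 M) \<and>
     kernel (a20 M) = image (a01 M)"

end

theory Submission
  imports Defs
begin

lemma asg_0: "add_subgroup S \<Longrightarrow> 0 \<in> S" by (simp add: add_subgroup_def)
lemma asg_diff: "add_subgroup S \<Longrightarrow> x \<in> S \<Longrightarrow> y \<in> S \<Longrightarrow> x - y \<in> S" by (simp add: add_subgroup_def)
lemma asg_neg: "add_subgroup S \<Longrightarrow> x \<in> S \<Longrightarrow> - x \<in> S"
  using asg_diff[of S 0 x] asg_0[of S] by simp
lemma asg_add: "add_subgroup S \<Longrightarrow> x \<in> S \<Longrightarrow> y \<in> S \<Longrightarrow> x + y \<in> S"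
  using asg_diff[of S x "- y"] asg_neg[of S y] by simp

lemma add_0: "additive f \<Longrightarrow> f 0 = 0"
  unfolding additive_def by (metis add.right_neutral add_left_cancel)
lemma add_diff: "additive f \<Longrightarrow> f (a - b) = f a - f b"
  unfolding additive_def by (metis add_diff_cancel eq_diff_eq)
lemma add_plus: "additive f \<Longrightarrow> f (a + b) = f a + f b"
  unfolding additive_def by simp
lemma add_comp: "additive f \<Longrightarrow> additive g \<Longrightarrow> additive (\<lambda>x. g (f x))"
  unfolding additive_def by simp

lemma ker_sg: "additive f \<Longrightarrow> add_subgroup (kernel f)"
  by (simp add: add_subgroup_def kernel_def add_0 add_diff)
lemma im_sg: "additive f \<Longrightarrow> add_subgroup (image f)"
  unfolding add_subgroup_def image_def
  by (metis add_0 add_diff rangeE rangeI)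

lemma rcos: "r_coset (subgrp X) Y a = {y + a | y. y \<in> Y}"
  by (auto simp: r_coset_def subgrp_def)

lemma rcos_eq: "add_subgroup Y \<Longrightarrow> (r_coset (subgrp X) Y a = r_coset (subgrp X) Y b) \<longleftrightarrow> a - b \<in> Y"
proof
  assume sY: "add_subgroup Y" and e: "r_coset (subgrp X) Y a = r_coset (subgrp X) Y b"
  have "0 + a \<in> {y + a | y. y \<in> Y}" using asg_0[OF sY] by blast
  then have "a \<in> r_coset (subgrp X) Y a" by (simp add: rcos)
  then have "a \<in> r_coset (subgrp X) Y b" using e by simp
  then have "a \<in> {y + b | y. y \<in> Y}" by (simp only: rcos)
  then obtain y where "y \<in> Y" "a = y + b" by blast
  then show "a - b \<in> Y" by simp
next
  assume sY: "add_subgroup Y" and d: "a - b \<in> Y"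
  show "r_coset (subgrp X) Y a = r_coset (subgrp X) Y b"
  proof (auto simp: rcos)
    fix y assume "y \<in> Y"
    then have "y + (a - b) \<in> Y" using asg_add[OF sY] d by blast
    moreover have "y + a = y + (a - b) + b" by simp
    ultimately show "\<exists>ya. y + a = ya + b \<and> ya \<in> Y" by blast
  next
    fix y assume "y \<in> Y"
    then have "y - (a - b) \<in> Y" using asg_diff[OF sY] d by blast
    moreover have "y + b = y - (a - b) + a" by simp
    ultimately show "\<exists>ya. y + b = ya + a \<and> ya \<in> Y" by blast
  qed
qed

lemma rcos_mult: "add_subgroup Y \<Longrightarrow>
  set_mult (subgrp X) (r_coset (subgrp X) Y a) (r_coset (subgrp X) Y b) = r_coset (subgrp X) Y (a + b)"
proof -
  assume sY: "add_subgroup Y"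
  have sm: "set_mult (subgrp X) A B = {u + v | u v. u \<in> A \<and> v \<in> B}" for A B
    by (auto simp: set_mult_def subgrp_def)
  show ?thesis unfolding sm rcos
  proof (rule equalityI; rule subsetI)
    fix z assume "z \<in> {u + v |u v. u \<in> {y + a |y. y \<in> Y} \<and> v \<in> {y + b |y. y \<in> Y}}"
    then obtain y1 y2 where y: "y1 \<in> Y" "y2 \<in> Y" "z = (y1 + a) + (y2 + b)" by blast
    then have "y1 + y2 \<in> Y" using asg_add[OF sY] by blast
    moreover have "z = (y1 + y2) + (a + b)" using y(3) by (simp add: algebra_simps)
    ultimately show "z \<in> {y + (a + b) |y. y \<in> Y}" by blast
  next
    fix z assume "z \<in> {y + (a + b) |y. y \<in> Y}"
    then obtain y where y: "y \<in> Y" "z = y + (a + b)" by blast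
    have "0 + b \<in> {y + b |y. y \<in> Y}" using asg_0[OF sY] by blast
    moreover have "y + a \<in> {y + a |y. y \<in> Y}" using y by blast
    moreover have "z = (y + a) + (0 + b)" using y by (simp add: algebra_simps)
    ultimately show "z \<in> {u + v |u v. u \<in> {y + a |y. y \<in> Y} \<and> v \<in> {y + b |y. y \<in> Y}}"
      by blast
  qed
qed

lemma carrier_quot: "carrier (subgrp X Mod Y) = (\<lambda>a. r_coset (subgrp X) Y a) ` X"
  by (auto simp: FactGroup_def RCOSETS_def subgrp_def)

lemma mult_quot: "monoid.mult (subgrp X Mod Y) A B = set_mult (subgrp X) A B"
  by (simp add: FactGroup_def)

lemma quot_iso_rel:
  fixes X Y :: "'a::ab_group_add set" and X' Y' :: "'b::ab_group_add set"
  assumes sY: "add_subgroup Y" and sY': "add_subgroup Y'"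
  and RX: "\<And>x x'. R x x' \<Longrightarrow> x \<in> X \<and> x' \<in> X'"
  and ex1: "\<And>x. x \<in> X \<Longrightarrow> \<exists>x'. R x x'"
  and ex2: "\<And>x'. x' \<in> X' \<Longrightarrow> \<exists>x. R x x'"
  and Rdiff: "\<And>a b a' b'. R a a' \<Longrightarrow> R b b' \<Longrightarrow> R (a - b) (a' - b')"
  and RY: "\<And>x x'. R x x' \<Longrightarrow> x \<in> Y \<longleftrightarrow> x' \<in> Y'"
  shows "\<exists>\<phi>. \<phi> \<in> iso (subgrp X Mod Y) (subgrp X' Mod Y') \<and>
     (\<forall>x x'. R x x' \<longrightarrow> \<phi> (r_coset (subgrp X) Y x) = r_coset (subgrp X') Y' x')"
proof -
  define cs where "cs a = r_coset (subgrp X) Y a" for a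
  define cs' where "cs' a = r_coset (subgrp X') Y' a" for a
  have cs_eq: "cs a = cs b \<longleftrightarrow> a - b \<in> Y" for a b unfolding cs_def using rcos_eq[OF sY] .
  have cs'_eq: "cs' a = cs' b \<longleftrightarrow> a - b \<in> Y'" for a b unfolding cs'_def using rcos_eq[OF sY'] .
  define \<phi> where "\<phi> C = cs' (SOME x'. \<exists>x. C = cs x \<and> R x x')" for C
  have val: "\<phi> (cs x) = cs' x'" if r: "R x x'" for x x'
  proof -
    have "\<exists>x'. \<exists>x0. cs x = cs x0 \<and> R x0 x'" using r by blast
    then have "\<exists>x0. cs x = cs x0 \<and> R x0 (SOME x'. \<exists>x0. cs x = cs x0 \<and> R x0 x')" by (rule someI_ex)
    then obtain x0 where x0: "cs x = cs x0" "R x0 (SOME x'. \<exists>x0. cs x = cs x0 \<and> R x0 x')" by blast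
    have "R (x - x0) (x' - (SOME x'. \<exists>x0. cs x = cs x0 \<and> R x0 x'))" using Rdiff[OF r x0(2)] .
    moreover have "x - x0 \<in> Y" using x0(1) cs_eq by blast
    ultimately have "cs' x' = cs' (SOME x'. \<exists>x0. cs x = cs x0 \<and> R x0 x')" using RY cs'_eq by blast
    then show ?thesis unfolding \<phi>_def by simp
  qed
  have R00: "R 0 0" if "x \<in> X" for x using ex1[OF that] Rdiff by fastforce
  have Rplus: "R (a + b) (a' + b')" if "R a a'" "R b b'" for a b a' b'
    using Rdiff[OF that(1) Rdiff[OF R00 that(2)]] that RX by fastforce
  have C1: "carrier (subgrp X Mod Y) = cs ` X" unfolding cs_def carrier_quot ..
  have C2: "carrier (subgrp X' Mod Y') = cs' ` X'" unfolding cs'_def carrier_quot ..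
  have hom: "\<phi> \<in> hom (subgrp X Mod Y) (subgrp X' Mod Y')"
    unfolding hom_def
  proof (intro CollectI conjI)
    show "\<phi> \<in> carrier (subgrp X Mod Y) \<rightarrow> carrier (subgrp X' Mod Y')"
      unfolding C1 C2 using ex1 val RX by fastforce
    show "\<forall>x\<in>carrier (subgrp X Mod Y). \<forall>y\<in>carrier (subgrp X Mod Y).
       \<phi> (x \<otimes>\<^bsub>subgrp X Mod Y\<^esub> y) = \<phi> x \<otimes>\<^bsub>subgrp X' Mod Y'\<^esub> \<phi> y"
      unfolding C1 mult_quot
    proof (intro ballI, elim imageE)
      fix a b A B assume AB: "A = cs a" "a \<in> X" "B = cs b" "b \<in> X"
      then have a: "a \<in> X" and b: "b \<in> X" by auto
      obtain a' b' where r: "R a a'" "R b b'" using ex1 a b by blast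
      have "set_mult (subgrp X) (cs a) (cs b) = cs (a + b)" unfolding cs_def using rcos_mult[OF sY] .
      moreover have "set_mult (subgrp X') (cs' a') (cs' b') = cs' (a' + b')" unfolding cs'_def using rcos_mult[OF sY'] .
      ultimately show "\<phi> (set_mult (subgrp X) A B) = set_mult (subgrp X') (\<phi> A) (\<phi> B)"
        using val[OF r(1)] val[OF r(2)] val[OF Rplus[OF r]] AB by simp
    qed
  qed
  have bij: "bij_betw \<phi> (carrier (subgrp X Mod Y)) (carrier (subgrp X' Mod Y'))"
    unfolding C1 C2 bij_betw_def
  proof
    show "inj_on \<phi> (cs ` X)"
      unfolding inj_on_def
    proof (intro ballI impI, elim imageE)
      fix a b A B assume e0: "\<phi> A = \<phi> B" and AB: "A = cs a" "a \<in> X" "B = cs b" "b \<in> X"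
      then have a: "a \<in> X" and b: "b \<in> X" and e: "\<phi> (cs a) = \<phi> (cs b)" by auto
      obtain a' b' where r: "R a a'" "R b b'" using ex1 a b by blast
      have "a' - b' \<in> Y'" using e val[OF r(1)] val[OF r(2)] cs'_eq by simp
      then have "a - b \<in> Y" using RY[OF Rdiff[OF r]] by simp
      then show "A = B" using cs_eq AB by simp
    qed
    show "\<phi> ` cs ` X = cs' ` X'"
    proof
      show "\<phi> ` cs ` X \<subseteq> cs' ` X'" using ex1 val RX by fastforce
      show "cs' ` X' \<subseteq> \<phi> ` cs ` X"
      proof
        fix C assume "C \<in> cs' ` X'"
        then obtain a' where a': "a' \<in> X'" "C = cs' a'" by blast
        obtain a where r: "R a a'" using ex2 a' by blast
        then show "C \<in> \<phi> ` cs ` X" using val[OF r] RX[OF r] a' by blast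
      qed
    qed
  qed
  show ?thesis using hom bij val unfolding iso_def cs_def cs'_def by blast
qed


lemma comp_sg: "z2_grading E Od \<Longrightarrow> add_subgroup (comp E Od d)"
  by (simp add: z2_grading_def comp_def)
lemma comp_int: "z2_grading E Od \<Longrightarrow> x \<in> comp E Od d \<Longrightarrow> x \<in> comp E Od (\<not> d) \<Longrightarrow> x = 0"
  by (cases d) (auto simp: z2_grading_def comp_def)
lemma comp_dec: "z2_grading E Od \<Longrightarrow> \<exists>e\<in>comp E Od c. \<exists>u\<in>comp E Od (\<not> c). x = e + u"
proof (cases c)
  case True
  assume "z2_grading E Od"
  then obtain e u where "e \<in> E" "u \<in> Od" "x = e + u" unfolding z2_grading_def by blast
  then show ?thesis using True unfolding comp_def by (metis add.commute)
next
  case False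
  assume "z2_grading E Od"
  then obtain e u where "e \<in> E" "u \<in> Od" "x = e + u" unfolding z2_grading_def by blast
  then show ?thesis using False unfolding comp_def by simp blast
qed

definition gm where "gm E Od E' Od' c f \<longleftrightarrow> (\<forall>d. \<forall>x\<in>comp E Od d. f x \<in> comp E' Od' (d \<noteq> c))"

lemma gm_pres: "grading_preserving E Od E' Od' f \<Longrightarrow> gm E Od E' Od' False f"
  unfolding gm_def grading_preserving_def comp_def by auto
lemma gm_rev: "grading_reversing E Od E' Od' f \<Longrightarrow> gm E Od E' Od' True f"
  unfolding gm_def grading_reversing_def comp_def by auto

lemma homog_pre:
  assumes gA: "z2_grading E Od" and gB: "z2_grading E' Od'" and af: "additive f"
    and g: "gm E Od E' Od' c f" and fy: "f y \<in> comp E' Od' d"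
  shows "\<exists>y0\<in>comp E Od (d \<noteq> c). f y0 = f y"
proof -
  obtain e u where eu: "e \<in> comp E Od (d \<noteq> c)" "u \<in> comp E Od (\<not> (d \<noteq> c))" "y = e + u"
    using comp_dec[OF gA] by blast
  have fe0: "f e \<in> comp E' Od' ((d \<noteq> c) \<noteq> c)" using g eu(1) unfolding gm_def by blast
  have fu0: "f u \<in> comp E' Od' ((\<not> (d \<noteq> c)) \<noteq> c)" using g eu(2) unfolding gm_def by blast
  have b1: "((d \<noteq> c) \<noteq> c) = d" and b2: "((\<not> (d \<noteq> c)) \<noteq> c) = (\<not> d)" by auto
  have fe: "f e \<in> comp E' Od' d" using fe0 b1 by simp
  have fu: "f u \<in> comp E' Od' (\<not> d)" using fu0 b2 by simp
  have "f u = f y - f e" using eu(3) add_plus[OF af] by simp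
  then have "f u \<in> comp E' Od' d" using asg_diff[OF comp_sg[OF gB] fy fe] by simp
  then have "f u = 0" using comp_int[OF gB] fu by blast
  then have "f e = f y" using eu(3) add_plus[OF af] by simp
  then show ?thesis using eu(1) by blast
qed

lemma ker_case:
  assumes gA: "z2_grading EA OA" and gB: "z2_grading EB OB" and gC: "z2_grading EC OC"
    and af: "additive f" and af': "additive f'" and ag: "additive g" and ag': "additive g'"
    and gf: "gm EA OA EC OC cf f" and gf': "gm EB OB EC OC cf' f'"
    and ex1: "kernel g' = image f" and ex2: "kernel g = image f'"
  shows "graded_quot_iso EA OA (kernel (\<lambda>x. g (f x))) (kernel f) EB OB (kernel (\<lambda>y. g' (f' y))) (kernel f')"
proof -
  define X where "X = kernel (\<lambda>x. g (f x))"
  define X' where "X' = kernel (\<lambda>y. g' (f' y))"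
  define R where "R x x' \<longleftrightarrow> x \<in> X \<and> x' \<in> X' \<and> f x = f' x'" for x x'
  have sX: "add_subgroup X" unfolding X_def by (rule ker_sg[OF add_comp[OF af ag]])
  have sX': "add_subgroup X'" unfolding X'_def by (rule ker_sg[OF add_comp[OF af' ag']])
  have sY: "add_subgroup (kernel f)" by (rule ker_sg[OF af])
  have sY': "add_subgroup (kernel f')" by (rule ker_sg[OF af'])
  have YX: "kernel f \<subseteq> X" unfolding X_def kernel_def using add_0[OF ag] by auto
  have YX': "kernel f' \<subseteq> X'" unfolding X'_def kernel_def using add_0[OF ag'] by auto
  have e1: "\<exists>x'. x' \<in> X' \<and> f' x' = f x" if "x \<in> X" for x
  proof -
    have "f x \<in> kernel g" using that unfolding X_def kernel_def by simp
    then obtain y where y: "f x = f' y" using ex2 unfolding image_def by auto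
    have "f x \<in> kernel g'" using ex1 unfolding image_def by auto
    then have "y \<in> X'" using y unfolding X'_def kernel_def by simp
    then show ?thesis using y by auto
  qed
  have e2: "\<exists>x. x \<in> X \<and> f x = f' x'" if "x' \<in> X'" for x'
  proof -
    have "f' x' \<in> kernel g'" using that unfolding X'_def kernel_def by simp
    then obtain y where y: "f' x' = f y" using ex1 unfolding image_def by auto
    have "f' x' \<in> kernel g" using ex2 unfolding image_def by auto
    then have "y \<in> X" using y unfolding X_def kernel_def by simp
    then show ?thesis using y by auto
  qed
  have "\<exists>\<phi>. \<phi> \<in> iso (subgrp X Mod kernel f) (subgrp X' Mod kernel f') \<and>
     (\<forall>x x'. R x x' \<longrightarrow> \<phi> (r_coset (subgrp X) (kernel f) x) = r_coset (subgrp X') (kernel f') x')"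
  proof (rule quot_iso_rel[OF sY sY'])
    show "\<And>x x'. R x x' \<Longrightarrow> x \<in> X \<and> x' \<in> X'" unfolding R_def by simp
    show "\<And>x. x \<in> X \<Longrightarrow> \<exists>x'. R x x'" unfolding R_def using e1 by metis
    show "\<And>x'. x' \<in> X' \<Longrightarrow> \<exists>x. R x x'" unfolding R_def using e2 by metis
    show "\<And>a b a' b'. R a a' \<Longrightarrow> R b b' \<Longrightarrow> R (a - b) (a' - b')"
      unfolding R_def using asg_diff[OF sX] asg_diff[OF sX'] add_diff[OF af] add_diff[OF af'] by simp
    show "\<And>x x'. R x x' \<Longrightarrow> x \<in> kernel f \<longleftrightarrow> x' \<in> kernel f'"
      unfolding R_def kernel_def by simp
  qed
  then obtain \<phi> where phi: "\<phi> \<in> iso (subgrp X Mod kernel f) (subgrp X' Mod kernel f')"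
     "\<And>x x'. R x x' \<Longrightarrow> \<phi> (r_coset (subgrp X) (kernel f) x) = r_coset (subgrp X') (kernel f') x'"
    by blast
  have gr: "\<exists>x'\<in>X' \<inter> comp EB OB (d \<noteq> (cf \<noteq> cf')).
       \<phi> (r_coset (subgrp X) (kernel f) x) = r_coset (subgrp X') (kernel f') x'"
    if x: "x \<in> X \<inter> comp EA OA d" for d x
  proof -
    have fx: "f x \<in> comp EC OC (d \<noteq> cf)" using gf x unfolding gm_def by blast
    obtain y where y: "y \<in> X'" "f' y = f x" using e1 x by blast
    obtain y0 where y0: "y0 \<in> comp EB OB ((d \<noteq> cf) \<noteq> cf')" "f' y0 = f' y"
      using homog_pre[OF gB gC af' gf', of y "d \<noteq> cf"] fx y by auto
    have "y0 \<in> X'" using y y0 unfolding X'_def kernel_def by simp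
    moreover have "R x y0" unfolding R_def using x y y0 \<open>y0 \<in> X'\<close> by simp
    moreover have "((d \<noteq> cf) \<noteq> cf') = (d \<noteq> (cf \<noteq> cf'))" by auto
    ultimately show ?thesis using phi(2) y0 by auto
  qed
  show ?thesis unfolding graded_quot_iso_def
    using sX sX' sY sY' YX YX' phi(1) gr unfolding X_def X'_def by blast
qed

lemma im_case:
  assumes gC: "z2_grading EC OC" and gD: "z2_grading ED OD" and gD': "z2_grading ED' OD'"
    and af: "additive f" and af': "additive f'" and ag: "additive g" and ag': "additive g'"
    and gg: "gm EC OC ED OD cg g" and gg': "gm EC OC ED' OD' cg' g'"
    and ex1: "kernel g' = image f" and ex2: "kernel g = image f'"
  shows "graded_quot_iso ED OD (image g) (image (\<lambda>x. g (f x))) ED' OD' (image g') (image (\<lambda>y. g' (f' y)))"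
proof -
  define Y where "Y = image (\<lambda>x. g (f x))"
  define Y' where "Y' = image (\<lambda>y. g' (f' y))"
  define R where "R x x' \<longleftrightarrow> (\<exists>c. x = g c \<and> x' = g' c)" for x x'
  have sX: "add_subgroup (image g)" by (rule im_sg[OF ag])
  have sX': "add_subgroup (image g')" by (rule im_sg[OF ag'])
  have sY: "add_subgroup Y" unfolding Y_def by (rule im_sg[OF add_comp[OF af ag]])
  have sY': "add_subgroup Y'" unfolding Y'_def by (rule im_sg[OF add_comp[OF af' ag']])
  have YX: "Y \<subseteq> image g" unfolding Y_def image_def by auto
  have YX': "Y' \<subseteq> image g'" unfolding Y'_def image_def by auto
  have k1: "g' c \<in> Y'" if "g c \<in> Y" for c
  proof -
    have "g c \<in> range (\<lambda>x. g (f x))" using that unfolding Y_def image_def .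
    then obtain a where a: "g c = g (f a)" by blast
    have "c - f a \<in> kernel g" using a add_diff[OF ag] unfolding kernel_def by simp
    then obtain b where b: "c - f a = f' b" using ex2 unfolding image_def by auto
    have "f a \<in> kernel g'" using ex1 unfolding image_def by auto
    then have "g' (f a) = 0" unfolding kernel_def by simp
    moreover have "c = f a + f' b" using b by (simp add: algebra_simps)
    ultimately have "g' c = g' (f' b)" using add_plus[OF ag'] by simp
    then show ?thesis unfolding Y'_def image_def by auto
  qed
  have k2: "g c \<in> Y" if "g' c \<in> Y'" for c
  proof -
    have "g' c \<in> range (\<lambda>x. g' (f' x))" using that unfolding Y'_def image_def .
    then obtain a where a: "g' c = g' (f' a)" by blast
    have "c - f' a \<in> kernel g'" using a add_diff[OF ag'] unfolding kernel_def by simp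
    then obtain b where b: "c - f' a = f b" using ex1 unfolding image_def by auto
    have "f' a \<in> kernel g" using ex2 unfolding image_def by auto
    then have "g (f' a) = 0" unfolding kernel_def by simp
    moreover have "c = f' a + f b" using b by (simp add: algebra_simps)
    ultimately have "g c = g (f b)" using add_plus[OF ag] by simp
    then show ?thesis unfolding Y_def image_def by auto
  qed
  have "\<exists>\<phi>. \<phi> \<in> iso (subgrp (image g) Mod Y) (subgrp (image g') Mod Y') \<and>
     (\<forall>x x'. R x x' \<longrightarrow> \<phi> (r_coset (subgrp (image g)) Y x) = r_coset (subgrp (image g')) Y' x')"
  proof (rule quot_iso_rel[OF sY sY'])
    show "\<And>x x'. R x x' \<Longrightarrow> x \<in> image g \<and> x' \<in> image g'" unfolding R_def image_def by auto
    show "\<And>x. x \<in> image g \<Longrightarrow> \<exists>x'. R x x'" unfolding R_def image_def by auto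
    show "\<And>x'. x' \<in> image g' \<Longrightarrow> \<exists>x. R x x'" unfolding R_def image_def by auto
    show "\<And>a b a' b'. R a a' \<Longrightarrow> R b b' \<Longrightarrow> R (a - b) (a' - b')"
      unfolding R_def using add_diff[OF ag] add_diff[OF ag'] by metis
    show "\<And>x x'. R x x' \<Longrightarrow> x \<in> Y \<longleftrightarrow> x' \<in> Y'"
      unfolding R_def using k1 k2 by blast
  qed
  then obtain \<phi> where phi: "\<phi> \<in> iso (subgrp (image g) Mod Y) (subgrp (image g') Mod Y')"
     "\<And>x x'. R x x' \<Longrightarrow> \<phi> (r_coset (subgrp (image g)) Y x) = r_coset (subgrp (image g')) Y' x'"
    by blast
  have gr: "\<exists>x'\<in>image g' \<inter> comp ED' OD' (d \<noteq> (cg \<noteq> cg')).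
       \<phi> (r_coset (subgrp (image g)) Y x) = r_coset (subgrp (image g')) Y' x'"
    if x: "x \<in> image g \<inter> comp ED OD d" for d x
  proof -
    obtain c where c: "x = g c" using x unfolding image_def by auto
    obtain c0 where c0: "c0 \<in> comp EC OC (d \<noteq> cg)" "g c0 = g c"
      using homog_pre[OF gC gD ag gg, of c d] x c by auto
    have "g' c0 \<in> comp ED' OD' ((d \<noteq> cg) \<noteq> cg')" using gg' c0(1) unfolding gm_def by blast
    moreover have "((d \<noteq> cg) \<noteq> cg') = (d \<noteq> (cg \<noteq> cg'))" by auto
    moreover have "R x (g' c0)" unfolding R_def using c c0 by (metis)
    moreover have "g' c0 \<in> image g'" unfolding image_def by auto
    ultimately show ?thesis using phi(2) by auto
  qed
  show ?thesis unfolding graded_quot_iso_def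
    using sX sX' sY sY' YX YX' phi(1) gr unfolding Y_def Y'_def by blast
qed



lemma kg1: "is_kmod p M \<Longrightarrow> z2_grading (ev0 M) (od0 M)"
  unfolding is_kmod_def by (elim conjE)

lemma kg2: "is_kmod p M \<Longrightarrow> z2_grading (ev1 M) (od1 M)"
  unfolding is_kmod_def by (elim conjE)

lemma kg3: "is_kmod p M \<Longrightarrow> z2_grading (ev2 M) (od2 M)"
  unfolding is_kmod_def by (elim conjE)

lemma kg4: "is_kmod p M \<Longrightarrow> additive (a01 M)"
  unfolding is_kmod_def by (elim conjE)

lemma kg5: "is_kmod p M \<Longrightarrow> additive (a10 M)"
  unfolding is_kmod_def by (elim conjE)

lemma kg6: "is_kmod p M \<Longrightarrow> additive (a02 M)"
  unfolding is_kmod_def by (elim conjE)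

lemma kg7: "is_kmod p M \<Longrightarrow> additive (a20 M)"
  unfolding is_kmod_def by (elim conjE)

lemma kg8: "is_kmod p M \<Longrightarrow> additive (a12 M)"
  unfolding is_kmod_def by (elim conjE)

lemma kg9: "is_kmod p M \<Longrightarrow> additive (a21 M)"
  unfolding is_kmod_def by (elim conjE)

lemma kg10: "is_kmod p M \<Longrightarrow> \<forall>x. a10 M (a01 M x) = Nop p (s1 M) x"
  unfolding is_kmod_def by (elim conjE)

lemma kg11: "is_kmod p M \<Longrightarrow> \<forall>x. a01 M (a10 M x) = Nop p (t0 M) x"
  unfolding is_kmod_def by (elim conjE)

lemma kg12: "is_kmod p M \<Longrightarrow> gm (ev1 M) (od1 M) (ev0 M) (od0 M) False (a01 M)"
  unfolding is_kmod_def by (rule gm_pres, elim conjE)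

lemma kg13: "is_kmod p M \<Longrightarrow> gm (ev0 M) (od0 M) (ev1 M) (od1 M) False (a10 M)"
  unfolding is_kmod_def by (rule gm_pres, elim conjE)

lemma kg14: "is_kmod p M \<Longrightarrow> gm (ev2 M) (od2 M) (ev0 M) (od0 M) False (a02 M)"
  unfolding is_kmod_def by (rule gm_pres, elim conjE)

lemma kg15: "is_kmod p M \<Longrightarrow> gm (ev0 M) (od0 M) (ev2 M) (od2 M) False (a20 M)"
  unfolding is_kmod_def by (rule gm_pres, elim conjE)

lemma kg16: "is_kmod p M \<Longrightarrow> gm (ev2 M) (od2 M) (ev1 M) (od1 M) True (a12 M)"
  unfolding is_kmod_def by (rule gm_rev, elim conjE)

lemma kg17: "is_kmod p M \<Longrightarrow> gm (ev1 M) (od1 M) (ev2 M) (od2 M) True (a21 M)"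
  unfolding is_kmod_def by (rule gm_rev, elim conjE)

lemma kx1: "exact_kmod M \<Longrightarrow> kernel (a21 M) = image (a10 M)"
  unfolding exact_kmod_def by (elim conjE)

lemma kx2: "exact_kmod M \<Longrightarrow> kernel (a02 M) = image (a21 M)"
  unfolding exact_kmod_def by (elim conjE)

lemma kx3: "exact_kmod M \<Longrightarrow> kernel (a10 M) = image (a02 M)"
  unfolding exact_kmod_def by (elim conjE)

lemma kx4: "exact_kmod M \<Longrightarrow> kernel (a12 M) = image (a20 M)"
  unfolding exact_kmod_def by (elim conjE)

lemma kx5: "exact_kmod M \<Longrightarrow> kernel (a01 M) = image (a12 M)"
  unfolding exact_kmod_def by (elim conjE)

lemma kx6: "exact_kmod M \<Longrightarrow> kernel (a20 M) = image (a01 M)"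
  unfolding exact_kmod_def by (elim conjE)

theorem lemma5p15:
  fixes p :: nat and M :: "('a::ab_group_add, 'b::ab_group_add, 'c::ab_group_add) kmod"
  assumes "prime p" and "is_kmod p M" and "exact_kmod M"
  shows
  "(graded_quot_iso (ev2 M) (od2 M) (kernel (\<lambda>z. z - t2 M z)) (kernel (a02 M))
                   (ev1 M) (od1 M) (kernel (Nop p (s1 M))) (kernel (a01 M)))
  \<and> (graded_quot_iso (ev2 M) (od2 M) (image (a20 M)) (image (\<lambda>z. z - t2 M z))
                   (ev1 M) (od1 M) (image (a10 M)) (image (Nop p (s1 M))))
  \<and> (graded_quot_iso (ev0 M) (od0 M) (kernel (\<lambda>x. x - t0 M x)) (kernel (a20 M))
                   (ev1 M) (od1 M) (kernel (\<lambda>y. y - s1 M y)) (kernel (a21 M)))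
  \<and> (graded_quot_iso (ev0 M) (od0 M) (image (a02 M)) (image (\<lambda>x. x - t0 M x))
                   (ev1 M) (od1 M) (image (a12 M)) (image (\<lambda>y. y - s1 M y)))
  \<and> (graded_quot_iso (ev0 M) (od0 M) (kernel (Nop p (t0 M))) (kernel (a10 M))
                   (ev2 M) (od2 M) (kernel (\<lambda>z. z - s2 M z)) (kernel (a12 M)))
  \<and> (graded_quot_iso (ev0 M) (od0 M) (image (a01 M)) (image (Nop p (t0 M)))
                   (ev2 M) (od2 M) (image (a21 M)) (image (\<lambda>z. z - s2 M z)))"
proof -
  note gr = kg1[OF assms(2)] kg2[OF assms(2)] kg3[OF assms(2)]
  note ad = kg4[OF assms(2)] kg5[OF assms(2)] kg6[OF assms(2)] kg7[OF assms(2)] kg8[OF assms(2)] kg9[OF assms(2)]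
  note g01 = kg12[OF assms(2)]
  note g10 = kg13[OF assms(2)]
  note g02 = kg14[OF assms(2)]
  note g20 = kg15[OF assms(2)]
  note g12 = kg16[OF assms(2)]
  note g21 = kg17[OF assms(2)]
  note k5 = kg10[OF assms(2)]
  note k6 = kg11[OF assms(2)]
  note ex = kx1[OF assms(3)] kx2[OF assms(3)] kx3[OF assms(3)] kx4[OF assms(3)] kx5[OF assms(3)] kx6[OF assms(3)]
  have e1: "(\<lambda>z. z - t2 M z) = (\<lambda>z. a20 M (a02 M z))" by (simp add: t2_def)
  have e2: "(\<lambda>z. z - t0 M z) = (\<lambda>z. a02 M (a20 M z))" by (simp add: t0_def)
  have e3: "(\<lambda>z. z - s1 M z) = (\<lambda>z. a12 M (a21 M z))" by (simp add: s1_def)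
  have e4: "(\<lambda>z. z - s2 M z) = (\<lambda>z. a21 M (a12 M z))" by (simp add: s2_def)
  have e5: "Nop p (s1 M) = (\<lambda>z. a10 M (a01 M z))" by (rule ext) (simp add: k5)
  have e6: "Nop p (t0 M) = (\<lambda>z. a01 M (a10 M z))" by (rule ext) (simp add: k6)
  show ?thesis unfolding e1 e2 e3 e4 e5 e6
  proof (intro conjI)
    show "graded_quot_iso (ev2 M) (od2 M) (kernel (\<lambda>z. a20 M (a02 M z))) (kernel (a02 M)) (ev1 M) (od1 M)
     (kernel (\<lambda>z. a10 M (a01 M z))) (kernel (a01 M))"
      by (rule ker_case[OF gr(3) gr(2) gr(1) ad(3) ad(1) ad(4) ad(2) g02 g01 ex(3) ex(6)])
    show "graded_quot_iso (ev2 M) (od2 M) (image (a20 M)) (image (\<lambda>z. a20 M (a02 M z))) (ev1 M) (od1 M)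
     (image (a10 M)) (image (\<lambda>z. a10 M (a01 M z)))"
      by (rule im_case[OF gr(1) gr(3) gr(2) ad(3) ad(1) ad(4) ad(2) g20 g10 ex(3) ex(6)])
    show "graded_quot_iso (ev0 M) (od0 M) (kernel (\<lambda>z. a02 M (a20 M z))) (kernel (a20 M)) (ev1 M) (od1 M)
     (kernel (\<lambda>z. a12 M (a21 M z))) (kernel (a21 M))"
      by (rule ker_case[OF gr(1) gr(2) gr(3) ad(4) ad(6) ad(3) ad(5) g20 g21 ex(4) ex(2)])
    show "graded_quot_iso (ev0 M) (od0 M) (image (a02 M)) (image (\<lambda>z. a02 M (a20 M z))) (ev1 M) (od1 M)
     (image (a12 M)) (image (\<lambda>z. a12 M (a21 M z)))"
      by (rule im_case[OF gr(3) gr(1) gr(2) ad(4) ad(6) ad(3) ad(5) g02 g12 ex(4) ex(2)])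
    show "graded_quot_iso (ev0 M) (od0 M) (kernel (\<lambda>z. a01 M (a10 M z))) (kernel (a10 M)) (ev2 M) (od2 M)
     (kernel (\<lambda>z. a21 M (a12 M z))) (kernel (a12 M))"
      by (rule ker_case[OF gr(1) gr(3) gr(2) ad(2) ad(5) ad(1) ad(6) g10 g12 ex(1) ex(5)])
    show "graded_quot_iso (ev0 M) (od0 M) (image (a01 M)) (image (\<lambda>z. a01 M (a10 M z))) (ev2 M) (od2 M)
     (image (a21 M)) (image (\<lambda>z. a21 M (a12 M z)))"
      by (rule im_case[OF gr(2) gr(1) gr(3) ad(2) ad(5) ad(1) ad(6) g01 g21 ex(1) ex(5)])
  qed
qed

end
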